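(* Let $q\ge2$, $k\ge1$, and let $\mathcal{A}$ be an automaton over $\mathrm{BS}(1,q)$. If $\rho$ is a run in $\mathsf{LeftRuns}_k(\mathcal{A})$, then $|\rho|/k<\mathsf{pmax}(\rho)+1$.
   Context: $\mathrm{BS}(1,q)$ is identified with $\mathbb{Z}[\tfrac1q]\rtimes\mathbb{Z}$ (pairs $(r,m)$ with $(r,m)(r',m')=(r+q^mr',m+m')$), with generating set $\Sigma=\{(1,0),(-1,0),(0,1),(0,-1)\}$. An automaton over $\mathrm{BS}(1,q)$ is $(Q,\Sigma,E,q_0,q_f)$ with $E\subseteq Q\times\Sigma\times Q$. A run $\rho=\rho_1\cdots\rho_\ell$ is a sequence of consecutive edges; $|\rho|=\ell$; its production $[\rho]$ is the product of its labels; it is accepting if it starts in $q_0$ and ends in $q_f$. If $[\rho]=(r,m)$, set $\mathrm{pos}(\rho)=m$; $\mathsf{pmax}(\rho)$ and $\mathsf{pmin}(\rho)$ are the maximum and minimum of $\mathrm{pos}(\pi)$ over prefixes $\pi$ of $\rho$. The run is returning-left if $\mathrm{pos}(\rho)=0$ and $\mathsf{pmin}(\rho)=0$. Its thickness is $\max_{z\in\mathbb{Z}}|\{i:\mathrm{pos}(\rho_1\cdots\rho_i)=z\}|$, and it is $k$-thin if its thickness is at most $k$. $\mathsf{LeftRuns}_k(\mathcal{A})$ is the set of accepting, $k$-thin, returning-left runs of $\mathcal{A}$. *)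

theory Defs
  imports Complex_Main
begin

text \<open>BS(1,q) as Z[1/q] \<rtimes> Z; elements (r,m) with r rational (in Z[1/q]).\<close>
type_synonym bs = "rat \<times> int"

definition bs_mult :: "nat \<Rightarrow> bs \<Rightarrow> bs \<Rightarrow> bs" where
  "bs_mult q x y = (fst x + (of_nat q) powi (snd x) * fst y, snd x + snd y)"

definition bs_one :: bs where "bs_one = (0, 0)"

definition Sigma_gen :: "bs set" where
  "Sigma_gen = {(1,0), (-1,0), (0,1), (0,-1)}"

definition automaton :: "'s set \<Rightarrow> ('s \<times> bs \<times> 's) set \<Rightarrow> 's \<Rightarrow> 's \<Rightarrow> bool" where
  "automaton Q E q0 qf \<longleftrightarrow> finite Q \<and> E \<subseteq> Q \<times> Sigma_gen \<times> Q \<and> q0 \<in> Q \<and> qf \<in> Q"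

definition is_run :: "('s \<times> bs \<times> 's) set \<Rightarrow> ('s \<times> bs \<times> 's) list \<Rightarrow> bool" where
  "is_run E \<rho> \<longleftrightarrow> set \<rho> \<subseteq> E \<and>
     (\<forall>i. Suc i < length \<rho> \<longrightarrow> snd (snd (\<rho> ! i)) = fst (\<rho> ! Suc i))"

definition accepting :: "'s \<Rightarrow> 's \<Rightarrow> ('s \<times> bs \<times> 's) list \<Rightarrow> bool" where
  "accepting q0 qf \<rho> \<longleftrightarrow>
     (if \<rho> = [] then q0 = qf else fst (hd \<rho>) = q0 \<and> snd (snd (last \<rho>)) = qf)"

definition production :: "nat \<Rightarrow> ('s \<times> bs \<times> 's) list \<Rightarrow> bs" where
  "production q \<rho> = foldl (\<lambda>g e. bs_mult q g (fst (snd e))) bs_one \<rho>"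

definition pos :: "nat \<Rightarrow> ('s \<times> bs \<times> 's) list \<Rightarrow> int" where
  "pos q \<rho> = snd (production q \<rho>)"

definition prefix_positions :: "nat \<Rightarrow> ('s \<times> bs \<times> 's) list \<Rightarrow> int set" where
  "prefix_positions q \<rho> = {pos q (take i \<rho>) | i. i \<le> length \<rho>}"

definition pmax :: "nat \<Rightarrow> ('s \<times> bs \<times> 's) list \<Rightarrow> int" where
  "pmax q \<rho> = Max (prefix_positions q \<rho>)"

definition pmin :: "nat \<Rightarrow> ('s \<times> bs \<times> 's) list \<Rightarrow> int" where
  "pmin q \<rho> = Min (prefix_positions q \<rho>)"

definition returning_left :: "nat \<Rightarrow> ('s \<times> bs \<times> 's) list \<Rightarrow> bool" where
  "returning_left q \<rho> \<longleftrightarrow> pos q \<rho> = 0 \<and> pmin q \<rho> = 0"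

text \<open>Thickness: max over z of the number of indices i (0 \<le> i \<le> |rho|) with pos(rho_1..rho_i) = z.
  Only values z that are positions of prefixes contribute a nonzero count.\<close>
definition visits :: "nat \<Rightarrow> ('s \<times> bs \<times> 's) list \<Rightarrow> int \<Rightarrow> nat" where
  "visits q \<rho> z = card {i. i \<le> length \<rho> \<and> pos q (take i \<rho>) = z}"

definition thickness :: "nat \<Rightarrow> ('s \<times> bs \<times> 's) list \<Rightarrow> nat" where
  "thickness q \<rho> = Max (visits q \<rho> ` prefix_positions q \<rho>)"

definition thin :: "nat \<Rightarrow> nat \<Rightarrow> ('s \<times> bs \<times> 's) list \<Rightarrow> bool" where
  "thin q k \<rho> \<longleftrightarrow> thickness q \<rho> \<le> k"

definition LeftRuns :: "nat \<Rightarrow> nat \<Rightarrow> 's set \<Rightarrow> ('s \<times> bs \<times> 's) set \<Rightarrow> 's \<Rightarrow> 's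
    \<Rightarrow> ('s \<times> bs \<times> 's) list set" where
  "LeftRuns q k Q E q0 qf =
     {\<rho>. is_run E \<rho> \<and> accepting q0 qf \<rho> \<and> thin q k \<rho> \<and> returning_left q \<rho>}"

end

theory Submission
  imports Defs
begin

theorem mainTheorem12:
  fixes q k :: nat and Q :: "'s set" and E :: "('s \<times> bs \<times> 's) set"
    and q0 qf :: 's and \<rho> :: "('s \<times> bs \<times> 's) list"
  assumes "q \<ge> 2" and "k \<ge> 1"
    and "automaton Q E q0 qf"
    and "\<rho> \<in> LeftRuns q k Q E q0 qf"
  shows "(of_nat (length \<rho>) :: rat) / of_nat k < of_int (pmax q \<rho>) + 1"
proof -
  define P where "P = prefix_positions q \<rho>"
  define n where "n = length \<rho>"
  have Pdef: "P = (\<lambda>i. pos q (take i \<rho>)) ` {..n}"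
    unfolding P_def prefix_positions_def n_def by auto
  have finP: "finite P" using Pdef by simp
  have neP: "P \<noteq> {}" using Pdef by auto
  have rl: "pmin q \<rho> = 0" and th: "thickness q \<rho> \<le> k"
    using assms(4) unfolding LeftRuns_def returning_left_def thin_def by auto
  have sub: "P \<subseteq> {0..pmax q \<rho>}"
  proof
    fix z assume z: "z \<in> P"
    have "Min P \<le> z" "z \<le> Max P" using finP z by auto
    then show "z \<in> {0..pmax q \<rho>}" using rl unfolding pmin_def pmax_def P_def by auto
  qed
  have cardP: "card P \<le> nat (pmax q \<rho> + 1)"
    using card_mono[OF _ sub] by simp
  have vis: "\<And>z. z \<in> P \<Longrightarrow> visits q \<rho> z \<le> k"
  proof -
    fix z assume "z \<in> P"
    then have "visits q \<rho> z \<le> thickness q \<rho>"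
      unfolding thickness_def P_def using finP P_def by (intro Max_ge) auto
    then show "visits q \<rho> z \<le> k" using th by simp
  qed
  have un: "{..n} = (\<Union>z\<in>P. {i. i \<le> length \<rho> \<and> pos q (take i \<rho>) = z})"
    using Pdef n_def by auto
  have "Suc n = card {..n}" by simp
  also have "\<dots> \<le> (\<Sum>z\<in>P. card {i. i \<le> length \<rho> \<and> pos q (take i \<rho>) = z})"
    unfolding un using finP by (rule card_UN_le)
  also have "\<dots> \<le> (\<Sum>z\<in>P. k)"
    using vis unfolding visits_def by (intro sum_mono) auto
  also have "\<dots> = card P * k" by simp
  also have "\<dots> \<le> nat (pmax q \<rho> + 1) * k" using cardP by simp
  finally have ineq: "Suc n \<le> nat (pmax q \<rho> + 1) * k" .
  have pm: "pmax q \<rho> \<ge> 0" using sub neP by auto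
  have "int (Suc n) \<le> (pmax q \<rho> + 1) * int k"
    using ineq pm by (metis int_nat_eq le_refl of_nat_le_iff of_nat_mult nat_int add_nonneg_nonneg zero_le_one)
  then have "rat_of_int (int n) < rat_of_int ((pmax q \<rho> + 1) * int k)"
    by linarith
  then have "rat_of_nat n < (of_int (pmax q \<rho>) + 1) * of_nat k" by simp
  moreover have "(0::rat) < of_nat k" using assms(2) by simp
  ultimately show ?thesis unfolding n_def by (simp add: divide_less_eq)
qed

end
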